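(* Let $\Omega,U\in C^\infty([0,\infty))$ and, for $r_0>0$, set $T(r)=\big(\Omega(r)-\Omega(r_0)\big)-\frac{\Omega'(r_0)}{U'(r_0)}\big(U(r)-U(r_0)\big)$. Suppose there exist $\Xi>0$ and a compact set $\mathcal{R}_0\ni r_0$ such that: (1) there exist $N_1\ge2$ and constants $C_i<\infty$ so that for all $0\le i\le N_1-1$ and all $r_0\in\mathcal{R}_0$, $$\sup_{r\ge\Xi}\frac{|T^{(i)}(r)|}{|T(r)|}+\sup_{r\ge\Xi}\frac{|(r\Omega'(r))^{(i)}|}{|T(r)|}\le C_i;$$ (2) for some $N_2\in\mathbb{N}$, $$\sup_{r_0\in\mathcal{R}_0}\left(\sup_{r\ge\Xi}|T^{(N_1)}(r)|+\sup_{r\ge\Xi}|(r\Omega'(r))^{(N_2)}|\right)<\infty.$$ If further $\inf_{r_0\in\mathcal{R}_0}\inf_{r\ge\Xi}|T(r)|>0$, then there exist $N_3,N_4\in\mathbb{N}$ and a constant $C>0$ such that, uniformly for $r_0\in\mathcal{R}_0$ and all $r,r'\ge\Xi$, $$\frac{|T(r)-T(r')|}{|T(r')|}\le C\sum_{n=1}^{N_3}|r-r'|^n,\qquad \frac{|r\Omega'(r)|}{|T(r')|}\le C\sum_{n=1}^{N_4}|r-r'|^n,$$ and $\inf_{r_0\in\mathcal{R}_0}\inf_{r\ge\Xi}|T(r)|>0$.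
   Context: The conclusion is the paper's assumption (H2) on the velocity field $u=r\Omega(r)\hat\theta+U(r)\hat z$ of the Ponomarenko dynamo, with the compact set $\mathcal{R}_0$ of admissible critical radii; this lemma gives checkable derivative conditions implying it.
   Formalization: In the second bound the sum starts at n = 0 rather than n = 1, that is $|r\Omega'(r)|/|T(r')| \le C\sum_{n=0}^{N_4}|r-r'|^n$, so its right side also contains the constant term C. The statement above fails without it. *)

theory Defs
  imports "HOL-Analysis.Analysis"
begin

definition smooth_on_halfline :: "(real \<Rightarrow> real) \<Rightarrow> bool" where
  "smooth_on_halfline f \<longleftrightarrow>
     (\<exists>D :: nat \<Rightarrow> real \<Rightarrow> real.
        (\<forall>x\<ge>0. D 0 x = f x) \<and>
        (\<forall>k. \<forall>x\<ge>0. (D k has_real_derivative D (Suc k) x) (at x within {0..})))"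

definition Tfun :: "(real \<Rightarrow> real) \<Rightarrow> (real \<Rightarrow> real) \<Rightarrow> real \<Rightarrow> real \<Rightarrow> real" where
  "Tfun Om U r0 r = (Om r - Om r0) - deriv Om r0 / deriv U r0 * (U r - U r0)"

end

theory Submission
  imports Defs
begin

lemma deriv_iter_eq:
  fixes f :: "real \<Rightarrow> real" and D :: "nat \<Rightarrow> real \<Rightarrow> real"
  assumes D0: "\<forall>x>0. D 0 x = f x"
    and DD: "\<forall>k x. x > 0 \<longrightarrow> (D k has_real_derivative D (Suc k) x) (at x)"
  shows "x > 0 \<Longrightarrow> (deriv ^^ k) f x = D k x"
proof (induction k arbitrary: x)
  case 0 then show ?case using D0 by simp
next
  case (Suc k)
  have "((deriv ^^ k) f has_real_derivative D (Suc k) x) (at x)"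
    by (rule has_field_derivative_transform_within_open[where S="{0<..}" and f="D k"])
       (use DD Suc in auto)
  then show ?case by (simp add: DERIV_imp_deriv)
qed

lemma deriv_iter_has:
  fixes f :: "real \<Rightarrow> real" and D :: "nat \<Rightarrow> real \<Rightarrow> real"
  assumes D0: "\<forall>x>0. D 0 x = f x"
    and DD: "\<forall>k x. x > 0 \<longrightarrow> (D k has_real_derivative D (Suc k) x) (at x)"
    and x: "x > 0"
  shows "((deriv ^^ k) f has_real_derivative (deriv ^^ Suc k) f x) (at x)"
proof -
  have "((deriv ^^ k) f has_real_derivative D (Suc k) x) (at x)"
    by (rule has_field_derivative_transform_within_open[where S="{0<..}" and f="D k"])
       (use DD x deriv_iter_eq[OF D0 DD] in auto)
  then show ?thesis using deriv_iter_eq[OF D0 DD x, of "Suc k"] by simp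
qed

lemma smooth_pos:
  assumes "smooth_on_halfline f"
  shows "\<exists>D. (\<forall>x>0. D 0 x = f x) \<and> (\<forall>k x. x > 0 \<longrightarrow> (D k has_real_derivative D (Suc k) x) (at x))"
proof -
  obtain D where D0: "\<forall>x\<ge>0. D 0 x = f x"
    and DD: "\<forall>k. \<forall>x\<ge>0. (D k has_real_derivative D (Suc k) x) (at x within {0..})"
    using assms unfolding smooth_on_halfline_def by blast
  have "(D k has_real_derivative D (Suc k) x) (at x)" if "x > 0" for k x
  proof -
    have "(D k has_real_derivative D (Suc k) x) (at x within {0..})" using DD that by auto
    moreover have "at x within {0..} = at x"
      by (rule at_within_interior) (use that in auto)
    ultimately show ?thesis by simp
  qed
  then show ?thesis using D0 by (intro exI[of _ D]) auto
qed

lemma Tfun_deriv_has: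
  assumes "smooth_on_halfline Om" "smooth_on_halfline U" "x > 0"
  shows "((deriv ^^ k) (Tfun Om U r0) has_real_derivative (deriv ^^ Suc k) (Tfun Om U r0) x) (at x)"
proof -
  obtain D1 where A1: "\<forall>x>0. D1 0 x = Om x" "\<forall>k x. x > 0 \<longrightarrow> (D1 k has_real_derivative D1 (Suc k) x) (at x)"
    using smooth_pos[OF assms(1)] by blast
  obtain D2 where A2: "\<forall>x>0. D2 0 x = U x" "\<forall>k x. x > 0 \<longrightarrow> (D2 k has_real_derivative D2 (Suc k) x) (at x)"
    using smooth_pos[OF assms(2)] by blast
  define c where "c = deriv Om r0 / deriv U r0"
  define D where "D = (\<lambda>k x. D1 k x - c * D2 k x + (if k = 0 then c * U r0 - Om r0 else 0))"
  have "\<forall>x>0. D 0 x = Tfun Om U r0 x"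
    using A1 A2 by (simp add: D_def Tfun_def c_def[symmetric] algebra_simps)
  moreover have "\<forall>k x. x > 0 \<longrightarrow> (D k has_real_derivative D (Suc k) x) (at x)"
  proof (intro allI impI)
    fix k and x :: real assume "x > 0"
    have "((\<lambda>x. D1 k x - c * D2 k x + (if k = 0 then c * U r0 - Om r0 else 0)) has_real_derivative
        D1 (Suc k) x - c * D2 (Suc k) x + 0) (at x)"
      by (intro derivative_intros) (use A1 A2 \<open>x > 0\<close> in \<open>auto intro!: DERIV_cmult\<close>)
    then show "(D k has_real_derivative D (Suc k) x) (at x)" by (simp add: D_def)
  qed
  ultimately show ?thesis using deriv_iter_has assms(3) by blast
qed

lemma term_bound:
  fixes a y B :: real
  assumes "\<bar>a\<bar> \<le> B"
  shows "\<bar>a / fact m * y ^ m\<bar> \<le> B * \<bar>y\<bar> ^ m"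
proof -
  have f: "(1::real) \<le> fact m" by simp
  have "\<bar>a / fact m\<bar> \<le> \<bar>a\<bar>"
    using f by (simp add: divide_le_eq abs_divide mult_le_cancel_left1 )
  then have "\<bar>a / fact m\<bar> \<le> B" using assms by linarith
  have "\<bar>a / fact m * y ^ m\<bar> = \<bar>a / fact m\<bar> * \<bar>y\<bar> ^ m" by (simp add: abs_mult power_abs)
  also have "\<dots> \<le> B * \<bar>y\<bar> ^ m" by (rule mult_right_mono) (use \<open>\<bar>a / fact m\<bar> \<le> B\<close> in simp_all)
  finally show ?thesis .
qed

lemma taylor_bound:
  fixes T :: "real \<Rightarrow> real" and Xi A M r r' :: real and K :: nat
  assumes derivs: "\<And>k x. x \<ge> Xi \<Longrightarrow> ((deriv ^^ k) T has_real_derivative (deriv ^^ Suc k) T x) (at x)"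
    and low: "\<And>m. m < K \<Longrightarrow> \<bar>(deriv ^^ Suc m) T r'\<bar> \<le> A * \<bar>T r'\<bar>"
    and top: "\<And>t. t \<ge> Xi \<Longrightarrow> \<bar>(deriv ^^ Suc K) T t\<bar> \<le> M"
    and A: "A \<ge> 0" and r: "r \<ge> Xi" and r': "r' \<ge> Xi"
  shows "\<bar>T r - T r'\<bar> \<le> (A * \<bar>T r'\<bar> + \<bar>M\<bar>) * (\<Sum>n=1..Suc K. \<bar>r - r'\<bar> ^ n)"
proof (cases "r = r'")
  case True
  have "0 \<le> (A * \<bar>T r'\<bar> + \<bar>M\<bar>) * (\<Sum>n=1..Suc K. \<bar>r - r'\<bar> ^ n)"
    by (intro mult_nonneg_nonneg add_nonneg_nonneg sum_nonneg) (use A in auto)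
  then show ?thesis using True by simp
next
  case False
  define B where "B = A * \<bar>T r'\<bar> + \<bar>M\<bar>"
  define h where "h = \<bar>r - r'\<bar>"
  have B0: "A * \<bar>T r'\<bar> \<le> B" "M \<le> B" unfolding B_def using A
    by (auto intro!: mult_nonneg_nonneg) (smt (verit) mult_nonneg_nonneg abs_ge_zero)
  obtain t where t: "(if r < r' then r < t \<and> t < r' else r' < t \<and> t < r)"
    and eq: "T r = (\<Sum>m<Suc K. (deriv ^^ m) T r' / fact m * (r - r') ^ m)
                 + (deriv ^^ Suc K) T t / fact (Suc K) * (r - r') ^ Suc K"
  proof -
    have D: "\<forall>m t. m < Suc K \<and> min r r' \<le> t \<and> t \<le> max r r' \<longrightarrow>
       ((\<lambda>m. (deriv ^^ m) T) m has_real_derivative (\<lambda>m. (deriv ^^ m) T) (Suc m) t) (at t)"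
      using derivs r r' by (metis min_def order_trans)
    show ?thesis
      using Taylor[of "Suc K" "\<lambda>m. (deriv ^^ m) T" T "min r r'" "max r r'" r' r, OF _ _ D] False that
      by auto
  qed
  have tX: "t \<ge> Xi" using t r r' by (auto split: if_splits)
  have "T r - T r' = (\<Sum>m<K. (deriv ^^ Suc m) T r' / fact (Suc m) * (r - r') ^ Suc m)
                 + (deriv ^^ Suc K) T t / fact (Suc K) * (r - r') ^ Suc K"
    using eq unfolding sum.lessThan_Suc_shift[of "\<lambda>m. (deriv ^^ m) T r' / fact m * (r - r') ^ m" K]
    by (simp only: funpow_0 fact_0 power_0)
  then have "\<bar>T r - T r'\<bar> \<le> (\<Sum>m<K. \<bar>(deriv ^^ Suc m) T r' / fact (Suc m) * (r - r') ^ Suc m\<bar>)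
                 + \<bar>(deriv ^^ Suc K) T t / fact (Suc K) * (r - r') ^ Suc K\<bar>"
    by (simp only:) (rule order_trans[OF abs_triangle_ineq add_mono[OF sum_abs order_refl]])
  also have "\<dots> \<le> (\<Sum>m<K. B * h ^ Suc m) + B * h ^ Suc K"
  proof (rule add_mono)
    show "(\<Sum>m<K. \<bar>(deriv ^^ Suc m) T r' / fact (Suc m) * (r - r') ^ Suc m\<bar>) \<le> (\<Sum>m<K. B * h ^ Suc m)"
      unfolding h_def by (rule sum_mono, rule term_bound) (use low B0 in \<open>auto intro: order_trans\<close>)
    show "\<bar>(deriv ^^ Suc K) T t / fact (Suc K) * (r - r') ^ Suc K\<bar> \<le> B * h ^ Suc K"
      unfolding h_def by (rule term_bound) (use top[OF tX] B0 in auto)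
  qed
  also have "\<dots> = B * (\<Sum>n=1..Suc K. h ^ n)"
    by (simp add: sum.atLeast1_atMost_eq sum_distrib_left distrib_left)
  finally show ?thesis unfolding B_def h_def .
qed

theorem lemma3p2:
  fixes Om U :: "real \<Rightarrow> real" and Xi :: real and R0 :: "real set"
    and N1 N2 :: nat and Cs :: "nat \<Rightarrow> real"
  assumes smooth_Om: "smooth_on_halfline Om"
    and smooth_U: "smooth_on_halfline U"
    and Xi_pos: "Xi > 0"
    and R0_compact: "compact R0" and R0_ne: "R0 \<noteq> {}" and R0_pos: "R0 \<subseteq> {0<..}"
    and N1_ge: "N1 \<ge> 2"
    and cond1: "\<forall>i<N1. \<forall>r0\<in>R0. \<forall>r s. r \<ge> Xi \<longrightarrow> s \<ge> Xi \<longrightarrow>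
                 \<bar>(deriv ^^ i) (Tfun Om U r0) r\<bar> / \<bar>Tfun Om U r0 r\<bar>
               + \<bar>(deriv ^^ i) (\<lambda>x. x * deriv Om x) s\<bar> / \<bar>Tfun Om U r0 s\<bar> \<le> Cs i"
    and cond2: "\<exists>M. \<forall>r0\<in>R0. \<forall>r s. r \<ge> Xi \<longrightarrow> s \<ge> Xi \<longrightarrow>
                 \<bar>(deriv ^^ N1) (Tfun Om U r0) r\<bar>
               + \<bar>(deriv ^^ N2) (\<lambda>x. x * deriv Om x) s\<bar> \<le> M"
    and inf_pos: "\<exists>\<delta>>0. \<forall>r0\<in>R0. \<forall>r\<ge>Xi. \<bar>Tfun Om U r0 r\<bar> \<ge> \<delta>"
  shows "\<exists>(N3::nat) (N4::nat) (C::real). C > 0 \<and>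
           (\<forall>r0\<in>R0. \<forall>r r'. r \<ge> Xi \<longrightarrow> r' \<ge> Xi \<longrightarrow>
              \<bar>Tfun Om U r0 r - Tfun Om U r0 r'\<bar> / \<bar>Tfun Om U r0 r'\<bar>
                 \<le> C * (\<Sum>n=1..N3. \<bar>r - r'\<bar> ^ n) \<and>
              \<bar>r * deriv Om r\<bar> / \<bar>Tfun Om U r0 r'\<bar>
                 \<le> C * (\<Sum>n=0..N4. \<bar>r - r'\<bar> ^ n))
         \<and> (\<exists>\<delta>>0. \<forall>r0\<in>R0. \<forall>r\<ge>Xi. \<bar>Tfun Om U r0 r\<bar> \<ge> \<delta>)"
proof -
  obtain M where M: "\<forall>r0\<in>R0. \<forall>r s. r \<ge> Xi \<longrightarrow> s \<ge> Xi \<longrightarrow>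
                 \<bar>(deriv ^^ N1) (Tfun Om U r0) r\<bar>
               + \<bar>(deriv ^^ N2) (\<lambda>x. x * deriv Om x) s\<bar> \<le> M" using cond2 by blast
  obtain \<delta> where dpos: "\<delta> > 0" and dlow: "\<forall>r0\<in>R0. \<forall>r\<ge>Xi. \<bar>Tfun Om U r0 r\<bar> \<ge> \<delta>"
    using inf_pos by blast
  obtain K where K: "N1 = Suc K" using N1_ge by (cases N1) auto
  define A where "A = (\<Sum>m<N1. \<bar>Cs m\<bar>)"
  define C1 where "C1 = A + \<bar>M\<bar> / \<delta> + 1"
  define C where "C = (1 + \<bar>Cs 0\<bar>) * (1 + C1)"
  have A0: "A \<ge> 0" unfolding A_def by (simp add: sum_nonneg)
  have CsA: "\<bar>Cs m\<bar> \<le> A" if "m < N1" for m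
    unfolding A_def by (rule member_le_sum) (use that in auto)
  have C10: "C1 \<ge> 1" unfolding C1_def using A0 dpos by simp
  have "(1 + C1) \<le> (1 + \<bar>Cs 0\<bar>) * (1 + C1)"
    using mult_right_mono[of 1 "1 + \<bar>Cs 0\<bar>" "1 + C1"] C10 by simp
  then have C1C: "C1 \<le> C" unfolding C_def by linarith
  have Cpos: "C > 0" using C10 C1C by linarith
  have main: "\<bar>Tfun Om U r0 r - Tfun Om U r0 r'\<bar> / \<bar>Tfun Om U r0 r'\<bar>
                 \<le> C * (\<Sum>n=1..N1. \<bar>r - r'\<bar> ^ n) \<and>
              \<bar>r * deriv Om r\<bar> / \<bar>Tfun Om U r0 r'\<bar>
                 \<le> C * (\<Sum>n=0..N1. \<bar>r - r'\<bar> ^ n)"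
    if r0: "r0 \<in> R0" and r: "r \<ge> Xi" and r': "r' \<ge> Xi" for r0 r r'
  proof -
    define T where "T = Tfun Om U r0"
    define \<tau> where "\<tau> = \<bar>T r'\<bar>"
    define S where "S = (\<Sum>n=1..N1. \<bar>r - r'\<bar> ^ n)"
    have S0: "S \<ge> 0" unfolding S_def by (simp add: sum_nonneg)
    have tau: "\<tau> \<ge> \<delta>" using dlow r0 r' unfolding \<tau>_def T_def by auto
    have taupos: "\<tau> > 0" using tau dpos by linarith
    have derivs: "\<And>k x. x \<ge> Xi \<Longrightarrow> ((deriv ^^ k) T has_real_derivative (deriv ^^ Suc k) T x) (at x)"
      unfolding T_def using Tfun_deriv_has[OF smooth_Om smooth_U] Xi_pos by force
    have low: "\<bar>(deriv ^^ Suc m) T r'\<bar> \<le> A * \<bar>T r'\<bar>" if "m < K" for m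
    proof -
      have "\<bar>(deriv ^^ Suc m) T r'\<bar> / \<tau> + \<bar>(deriv ^^ Suc m) (\<lambda>x. x * deriv Om x) r'\<bar> / \<tau> \<le> Cs (Suc m)"
        using cond1 that K r0 r' unfolding T_def \<tau>_def by auto
      moreover have "0 \<le> \<bar>(deriv ^^ Suc m) (\<lambda>x. x * deriv Om x) r'\<bar> / \<tau>" using taupos by simp
      ultimately have "\<bar>(deriv ^^ Suc m) T r'\<bar> / \<tau> \<le> A" using CsA[of "Suc m"] that K by linarith
      then show ?thesis using taupos unfolding \<tau>_def by (simp add: divide_le_eq mult.commute)
    qed
    have top: "\<bar>(deriv ^^ Suc K) T t\<bar> \<le> M" if "t \<ge> Xi" for t
    proof -
      have "\<bar>(deriv ^^ Suc K) T t\<bar> + \<bar>(deriv ^^ N2) (\<lambda>x. x * deriv Om x) t\<bar> \<le> M"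
        using M r0 that K unfolding T_def by auto
      moreover have "0 \<le> \<bar>(deriv ^^ N2) (\<lambda>x. x * deriv Om x) t\<bar>" by simp
      ultimately show ?thesis by linarith
    qed
    have tb: "\<bar>T r - T r'\<bar> \<le> (A * \<tau> + \<bar>M\<bar>) * S"
      using taylor_bound[of Xi T K r' A M r, OF derivs low top A0 r r'] K
      unfolding \<tau>_def S_def by simp
    have "\<bar>M\<bar> \<le> \<bar>M\<bar> / \<delta> * \<tau>"
    proof -
      have "\<bar>M\<bar> = \<bar>M\<bar> / \<delta> * \<delta>" using dpos by simp
      also have "\<dots> \<le> \<bar>M\<bar> / \<delta> * \<tau>" by (rule mult_left_mono) (use tau dpos in auto)
      finally show ?thesis .
    qed
    then have "A * \<tau> + \<bar>M\<bar> \<le> C1 * \<tau>" unfolding C1_def using taupos by (simp add: algebra_simps)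
    then have "\<bar>T r - T r'\<bar> \<le> C1 * \<tau> * S" using tb S0 by (meson mult_right_mono order_trans)
    then have first: "\<bar>T r - T r'\<bar> / \<tau> \<le> C1 * S" using taupos by (simp add: divide_le_eq algebra_simps)
    have "C1 * S \<le> C * S" using C1C S0 by (rule mult_right_mono)
    with first have goal1: "\<bar>T r - T r'\<bar> / \<tau> \<le> C * S" by linarith
    have Trpos: "\<bar>T r\<bar> > 0" using dlow r0 r dpos unfolding T_def by force
    have "\<bar>T r\<bar> / \<bar>T r\<bar> + \<bar>r * deriv Om r\<bar> / \<bar>T r\<bar> \<le> Cs 0"
      using cond1[rule_format, of 0 r0 r r] N1_ge r0 r unfolding T_def by simp
    then have "\<bar>r * deriv Om r\<bar> / \<bar>T r\<bar> \<le> \<bar>Cs 0\<bar>" using Trpos by simp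
    then have rO: "\<bar>r * deriv Om r\<bar> \<le> \<bar>Cs 0\<bar> * \<bar>T r\<bar>" using Trpos by (simp add: divide_le_eq)
    have "\<bar>T r\<bar> \<le> \<tau> + \<tau> * (C1 * S)"
      using first taupos unfolding \<tau>_def by (simp add: divide_le_eq algebra_simps)
    then have "\<bar>r * deriv Om r\<bar> \<le> \<bar>Cs 0\<bar> * (\<tau> * (1 + C1 * S))"
    proof -
      have "\<bar>Cs 0\<bar> * \<bar>T r\<bar> \<le> \<bar>Cs 0\<bar> * (\<tau> + \<tau> * (C1 * S))"
        by (rule mult_left_mono) (use \<open>\<bar>T r\<bar> \<le> \<tau> + \<tau> * (C1 * S)\<close> in auto)
      then show ?thesis using rO by (simp add: algebra_simps)
    qed
    then have "\<bar>r * deriv Om r\<bar> / \<tau> \<le> \<bar>Cs 0\<bar> * (1 + C1 * S)"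
      using taupos by (simp add: divide_le_eq algebra_simps)
    also have "\<dots> \<le> C * (1 + S)"
    proof -
      have "1 + C1 * S \<le> (1 + C1) * (1 + S)" using C10 S0 by (simp add: algebra_simps)
      then have "\<bar>Cs 0\<bar> * (1 + C1 * S) \<le> (1 + \<bar>Cs 0\<bar>) * ((1 + C1) * (1 + S))"
        using C10 S0 by (intro mult_mono) auto
      then show ?thesis unfolding C_def by (simp add: mult.assoc)
    qed
    also have "1 + S = (\<Sum>n=0..N1. \<bar>r - r'\<bar> ^ n)"
      unfolding S_def by (simp add: sum.atLeast_Suc_atMost[of 0 N1, symmetric] sum.atLeast_Suc_atMost)
    finally show ?thesis using goal1 unfolding T_def \<tau>_def S_def by simp
  qed
  show ?thesis
    by (rule exI[of _ N1], rule exI[of _ N1], rule exI[of _ C]) (use Cpos main inf_pos in auto)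
qed

end
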